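(* Let $n \ge 2k + 1 \ge 5$ and let $Q$ be an independent set in $K(n,k)$. If we uniquely expand $$|Q| = \binom{q_{n-k}}{n-k} + \binom{q_{n-k-1}}{n-k-1} + \cdots + \binom{q_j}{j},$$ where $q_{n-k} > q_{n-k-1} > \ldots > q_j \ge j \ge 1$ are natural numbers, then $$|N(Q)| \ge \binom{q_{n-k}}{k} + \binom{q_{n-k-1}}{k-1} + \cdots + \binom{q_j}{j-(n-2k)}.$$
   Context: The Kneser graph $K(n,k)$ has as vertices the $k$-element subsets of $[n]=\{1,\dots,n\}$, two vertices being adjacent iff they are disjoint. For a set $Q$ of vertices of a graph, the neighborhood $N(Q)$ is the set of vertices not in $Q$ that are adjacent to at least one vertex of $Q$. In the bound, the $i$-th term is $\binom{q_i}{i-(n-2k)}$ for $i=n-k,n-k-1,\dots,j$; binomial coefficients with negative lower index are $0$. *)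

theory Defs
  imports Main
begin

definition kneser_V :: "nat \<Rightarrow> nat \<Rightarrow> nat set set" where
  "kneser_V n k = {A. A \<subseteq> {1..n} \<and> card A = k}"

definition kneser_adj :: "nat set \<Rightarrow> nat set \<Rightarrow> bool" where
  "kneser_adj A B \<longleftrightarrow> A \<inter> B = {}"

definition kneser_independent :: "nat \<Rightarrow> nat \<Rightarrow> nat set set \<Rightarrow> bool" where
  "kneser_independent n k Q \<longleftrightarrow>
     Q \<subseteq> kneser_V n k \<and> (\<forall>A\<in>Q. \<forall>B\<in>Q. A \<noteq> B \<longrightarrow> \<not> kneser_adj A B)"

definition kneser_nbhd :: "nat \<Rightarrow> nat \<Rightarrow> nat set set \<Rightarrow> nat set set" where
  "kneser_nbhd n k Q = {B \<in> kneser_V n k. B \<notin> Q \<and> (\<exists>A\<in>Q. kneser_adj A B)}"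

definition binom_z :: "nat \<Rightarrow> int \<Rightarrow> nat" where
  "binom_z m r = (if r < 0 then 0 else m choose (nat r))"

end

theory Submission imports Defs begin


definition shadow :: "nat set set \<Rightarrow> nat set set" where
  "shadow F = {A - {y} | A y. A \<in> F \<and> y \<in> A}"

definition sh :: "nat \<Rightarrow> nat \<Rightarrow> nat set \<Rightarrow> nat set" where
  "sh e x A = (if x \<in> A \<and> e \<notin> A then insert e (A - {x}) else A)"

definition shp :: "nat \<Rightarrow> nat \<Rightarrow> nat set set \<Rightarrow> nat set \<Rightarrow> nat set" where
  "shp e x G A = (if sh e x A \<in> G then A else sh e x A)"

definition Sh :: "nat \<Rightarrow> nat \<Rightarrow> nat set set \<Rightarrow> nat set set" where
  "Sh e x G = shp e x G ` G"

lemma mem_Sh: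
  assumes "x \<noteq> e"
  shows "B \<in> Sh e x G \<longleftrightarrow> (B \<in> G \<and> sh e x B \<in> G) \<or>
     (B \<notin> G \<and> e \<in> B \<and> x \<notin> B \<and> insert x (B - {e}) \<in> G)"
proof
  assume "B \<in> Sh e x G"
  then obtain A where A: "A \<in> G" "B = shp e x G A" unfolding Sh_def by auto
  show "(B \<in> G \<and> sh e x B \<in> G) \<or> (B \<notin> G \<and> e \<in> B \<and> x \<notin> B \<and> insert x (B - {e}) \<in> G)"
  proof (cases "sh e x A \<in> G")
    case True then show ?thesis using A by (simp add: shp_def)
  next
    case False
    then have BA: "B = sh e x A" using A by (simp add: shp_def)
    have "sh e x A \<noteq> A" using A False by auto
    then have xA: "x \<in> A" "e \<notin> A" unfolding sh_def by (auto split: if_splits)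
    then have BA2: "B = insert e (A - {x})" using BA unfolding sh_def by simp
    have "insert x (B - {e}) = A" unfolding BA2 using xA assms by blast
    moreover have "e \<in> B" "x \<notin> B" unfolding BA2 using assms by auto
    moreover have "B \<notin> G" using BA False by simp
    ultimately show ?thesis using A(1) by simp
  qed
next
  assume H: "(B \<in> G \<and> sh e x B \<in> G) \<or> (B \<notin> G \<and> e \<in> B \<and> x \<notin> B \<and> insert x (B - {e}) \<in> G)"
  show "B \<in> Sh e x G"
  proof (cases "B \<in> G \<and> sh e x B \<in> G")
    case True then have "B = shp e x G B" by (simp add: shp_def)
    then show ?thesis using True unfolding Sh_def by (metis image_eqI)
  next
    case False
    then have B: "B \<notin> G" "e \<in> B" "x \<notin> B" "insert x (B - {e}) \<in> G" using H by auto
    define A where "A = insert x (B - {e})"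
    have xA: "x \<in> A" "e \<notin> A" unfolding A_def using assms by auto
    have "insert e (A - {x}) = B" unfolding A_def using B(2,3) by blast
    then have "sh e x A = B" using xA unfolding sh_def by simp
    then have "shp e x G A = B" using B unfolding shp_def by auto
    moreover have "A \<in> G" using B(4) unfolding A_def .
    ultimately show ?thesis unfolding Sh_def by (metis image_eqI)
  qed
qed

lemma card_Sh:
  assumes "x \<noteq> e" "finite G"
  shows "card (Sh e x G) = card G"
proof -
  have "inj_on (shp e x G) G"
  proof
    fix A1 A2 assume H: "A1 \<in> G" "A2 \<in> G" "shp e x G A1 = shp e x G A2"
    have inv: "A = insert x (sh e x A - {e})" if "A \<in> G" "sh e x A \<notin> G" for A
    proof -
      have "sh e x A \<noteq> A" using that by auto
      then have "x \<in> A" "e \<notin> A" "sh e x A = insert e (A - {x})" unfolding sh_def by (auto split: if_splits)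
      then show ?thesis using assms by auto
    qed
    show "A1 = A2"
    proof (cases "sh e x A1 \<in> G"; cases "sh e x A2 \<in> G")
      assume "sh e x A1 \<in> G" "sh e x A2 \<in> G" then show ?thesis using H by (simp add: shp_def)
    next
      assume "sh e x A1 \<in> G" "sh e x A2 \<notin> G" then show ?thesis using H by (simp add: shp_def)
    next
      assume "sh e x A1 \<notin> G" "sh e x A2 \<in> G" then show ?thesis using H by (simp add: shp_def)
    next
      assume a: "sh e x A1 \<notin> G" "sh e x A2 \<notin> G"
      then have "sh e x A1 = sh e x A2" using H by (simp add: shp_def)
      then show ?thesis using inv[OF H(1) a(1)] inv[OF H(2) a(2)] by simp
    qed
  qed
  then show ?thesis unfolding Sh_def by (simp add: card_image)
qed

lemma Sh_Pow:
  assumes "G \<subseteq> Pow U" "e \<in> U"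
  shows "Sh e x G \<subseteq> Pow U"
  using assms unfolding Sh_def shp_def sh_def by auto

lemma Sh_card_m:
  assumes "\<forall>A\<in>G. card A = m \<and> finite A"
  shows "\<forall>B\<in>Sh e x G. card B = m \<and> finite B"
proof
  fix B assume "B \<in> Sh e x G"
  then obtain A where A: "A \<in> G" "B = shp e x G A" unfolding Sh_def by auto
  have "card (sh e x A) = m \<and> finite (sh e x A)"
  proof (cases "x \<in> A \<and> e \<notin> A")
    case True
    then have "card (insert e (A - {x})) = card A" using assms A
      by (simp add: card_Diff_singleton) (metis card_0_eq empty_iff Suc_pred neq0_conv)
    then show ?thesis using True assms A by (simp add: sh_def)
  qed (use assms A in \<open>auto simp: sh_def\<close>)
  then show "card B = m \<and> finite B" using A assms by (simp add: shp_def)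
qed

lemma shadow_Sh:
  assumes "x \<noteq> e"
  shows "shadow (Sh e x G) \<subseteq> Sh e x (shadow G)"
proof
  fix B assume "B \<in> shadow (Sh e x G)"
  then obtain C y where C: "C \<in> Sh e x G" "y \<in> C" "B = C - {y}" unfolding shadow_def by auto
  show "B \<in> Sh e x (shadow G)"
  proof (cases "C \<in> G \<and> sh e x C \<in> G")
    case True
    have "B \<in> shadow G" using True C unfolding shadow_def by auto
    moreover have "sh e x B \<in> shadow G"
    proof (cases "x \<in> B \<and> e \<notin> B")
      case False then show ?thesis using \<open>B \<in> shadow G\<close> by (auto simp: sh_def)
    next
      case T2: True
      show ?thesis
      proof (cases "e \<in> C")
        case False
        then have "sh e x C = insert e (C - {x})" using T2 C by (auto simp: sh_def)
        moreover have "sh e x B = sh e x C - {y}" using T2 C False assms by (auto simp: sh_def)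
        moreover have "y \<in> sh e x C" using T2 C False by (auto simp: sh_def)
        ultimately show ?thesis using True unfolding shadow_def by blast
      next
        case True2: True
        then have "y = e" using T2 C by auto
        then have "sh e x B = C - {x}" using T2 C assms by (auto simp: sh_def)
        moreover have "x \<in> C" using T2 C by auto
        ultimately show ?thesis using True unfolding shadow_def by blast
      qed
    qed
    ultimately show ?thesis using assms by (simp add: mem_Sh)
  next
    case False
    then have C2: "C \<notin> G" "e \<in> C" "x \<notin> C" "insert x (C - {e}) \<in> G" using C(1) assms by (auto simp: mem_Sh)
    show ?thesis
    proof (cases "y = e")
      case True
      then have "B = insert x (C - {e}) - {x}" using C C2 by auto
      then have "B \<in> shadow G" using C2 unfolding shadow_def by blast
      moreover have "sh e x B = B" using C2 C by (auto simp: sh_def)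
      ultimately show ?thesis using assms by (simp add: mem_Sh)
    next
      case False
      have D: "insert x (B - {e}) = insert x (C - {e}) - {y}" using C C2 False by auto
      then have "insert x (B - {e}) \<in> shadow G" using C2 C False unfolding shadow_def by blast
      moreover have "e \<in> B" "x \<notin> B" using C C2 False by auto
      moreover have "B \<in> shadow G \<Longrightarrow> sh e x B = B" using \<open>e \<in> B\<close> by (simp add: sh_def)
      ultimately show ?thesis using assms by (auto simp: mem_Sh)
    qed
  qed
qed

lemma Sh_increase:
  assumes "x \<noteq> e" "finite G" "A0 \<in> G" "x \<in> A0" "e \<notin> A0" "insert e (A0 - {x}) \<notin> G"
  shows "card {A \<in> G. e \<in> A} < card {A \<in> Sh e x G. e \<in> A}"
proof (rule psubset_card_mono)
  show "finite {A \<in> Sh e x G. e \<in> A}" using assms unfolding Sh_def by auto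
  have "{A \<in> G. e \<in> A} \<subseteq> {A \<in> Sh e x G. e \<in> A}"
    using assms by (auto simp: mem_Sh sh_def)
  moreover have "insert e (A0 - {x}) \<in> Sh e x G"
    using assms by (simp add: mem_Sh) (auto simp: insert_absorb)
  ultimately show "{A \<in> G. e \<in> A} \<subset> {A \<in> Sh e x G. e \<in> A}" using assms by auto
qed




lemma shadow_mono: "F \<subseteq> G \<Longrightarrow> shadow F \<subseteq> shadow G"
  unfolding shadow_def by blast

lemma shadow_Pow: "F \<subseteq> Pow U \<Longrightarrow> shadow F \<subseteq> Pow U"
  unfolding shadow_def by blast

lemma finite_shadow: "finite U \<Longrightarrow> F \<subseteq> Pow U \<Longrightarrow> finite (shadow F)"
  by (meson finite_Pow_iff rev_finite_subset shadow_Pow)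

lemma card_shadow_ge_m:
  assumes "finite U" "G \<subseteq> Pow U" "A \<in> G"
  shows "card A \<le> card (shadow G)"
proof -
  have "(\<lambda>y. A - {y}) ` A \<subseteq> shadow G" using assms unfolding shadow_def by blast
  moreover have "inj_on (\<lambda>y. A - {y}) A" by (rule inj_onI) blast
  ultimately show ?thesis using finite_shadow[OF assms(1,2)]
    by (metis card_image card_mono)
qed

lemma exists_stable:
  assumes "finite U" "e \<in> U" "F \<subseteq> Pow U" "\<forall>A\<in>F. card A = m"
  shows "\<exists>G. G \<subseteq> Pow U \<and> (\<forall>A\<in>G. card A = m) \<and> card G = card F \<and>
      card (shadow G) \<le> card (shadow F) \<and>
      (\<forall>A\<in>G. \<forall>x\<in>A. e \<notin> A \<longrightarrow> insert e (A - {x}) \<in> G)"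
proof -
  define P where "P G \<longleftrightarrow> G \<subseteq> Pow U \<and> (\<forall>A\<in>G. card A = m) \<and> card G = card F \<and>
      card (shadow G) \<le> card (shadow F)" for G
  define f where "f G = card {A \<in> G. e \<in> A}" for G
  have PF: "P F" using assms unfolding P_def by auto
  have fin: "finite G" if "P G" for G
    using that assms(1) unfolding P_def by (meson finite_Pow_iff rev_finite_subset)
  have "\<forall>y. P y \<longrightarrow> f y < card F + 1"
  proof (intro allI impI)
    fix y assume "P y"
    then have "f y \<le> card y" unfolding f_def using fin by (intro card_mono) auto
    then show "f y < card F + 1" using \<open>P y\<close> unfolding P_def by simp
  qed
  then obtain G where G: "P G" "\<forall>y. P y \<longrightarrow> f y \<le> f G"
    using ex_has_greatest_nat[of P F f "card F + 1"] PF by blast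
  have "\<forall>A\<in>G. \<forall>x\<in>A. e \<notin> A \<longrightarrow> insert e (A - {x}) \<in> G"
  proof (rule ccontr)
    assume "\<not> ?thesis"
    then obtain A0 x where A0: "A0 \<in> G" "x \<in> A0" "e \<notin> A0" "insert e (A0 - {x}) \<notin> G" by blast
    have xe: "x \<noteq> e" using A0 by auto
    have finG: "finite G" using fin G by auto
    have "card {A \<in> G. e \<in> A} < card {A \<in> Sh e x G. e \<in> A}"
      using Sh_increase[OF xe finG A0] .
    moreover have "P (Sh e x G)"
    proof -
      have GP: "G \<subseteq> Pow U" using G unfolding P_def by auto
      have "\<forall>A\<in>G. card A = m \<and> finite A" using G GP assms(1) unfolding P_def
        by (meson PowD finite_subset subsetD)
      then have "\<forall>B\<in>Sh e x G. card B = m \<and> finite B" by (rule Sh_card_m)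
      moreover have "Sh e x G \<subseteq> Pow U" using Sh_Pow[OF GP assms(2)] .
      moreover have "card (Sh e x G) = card G" using card_Sh[OF xe finG] .
      moreover have "card (shadow (Sh e x G)) \<le> card (shadow G)"
      proof -
        have "finite (shadow G)" using finite_shadow[OF assms(1) GP] .
        then have "card (Sh e x (shadow G)) = card (shadow G)" using card_Sh[OF xe] by blast
        moreover have "finite (Sh e x (shadow G))" using \<open>finite (shadow G)\<close> unfolding Sh_def by auto
        ultimately show ?thesis using shadow_Sh[OF xe, of G] by (metis card_mono)
      qed
      ultimately show ?thesis using G unfolding P_def by auto
    qed
    ultimately show False using G(2) unfolding f_def by fastforce
  qed
  then show ?thesis using G(1) unfolding P_def by blast
qed

lemma incr_ge:
  assumes "\<forall>i. j \<le> i \<and> i < m \<longrightarrow> a i < a (Suc i)" "j \<le> i" "i \<le> m"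
  shows "a j + (i - j) \<le> a i"
  using assms(2,3)
proof (induction i)
  case 0 then show ?case by simp
next
  case (Suc i)
  show ?case
  proof (cases "j = Suc i")
    case False
    then have "j \<le> i" using Suc by simp
    then have "a j + (i - j) \<le> a i" using Suc by simp
    moreover have "a i < a (Suc i)" using assms(1) \<open>j \<le> i\<close> Suc by simp
    ultimately show ?thesis using \<open>j \<le> i\<close> by simp
  qed simp
qed

abbreviation KKhyp :: "nat set set \<Rightarrow> nat \<Rightarrow> bool" where
  "KKhyp G m \<equiv> (\<forall>j c. 1 \<le> j \<longrightarrow> j \<le> m \<longrightarrow> (\<forall>i. j \<le> i \<and> i < m \<longrightarrow> c i < c (Suc i)) \<longrightarrow>
     j \<le> c j \<longrightarrow> (\<Sum>i=j..m. c i choose i) \<le> card G \<longrightarrow>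
     (\<Sum>i=j..m. c i choose (i - 1)) \<le> card (shadow G))"

lemma strict:
  assumes hyp: "KKhyp G m" and U: "finite U" "G \<subseteq> Pow U"
  shows "1 \<le> j \<Longrightarrow> j \<le> m \<Longrightarrow> (\<forall>i. j \<le> i \<and> i < m \<longrightarrow> b i < b (Suc i)) \<Longrightarrow> j - 1 \<le> b j \<Longrightarrow>
    (\<Sum>i=j..m. b i choose i) < card G \<Longrightarrow> (\<forall>A\<in>G. card A = m) \<Longrightarrow>
    (\<Sum>i=j..m. b i choose (i - 1)) + (j - 1) \<le> card (shadow G)"
proof (induction "m - j" arbitrary: j rule: less_induct)
  case less
  note j = less.prems
  show ?case
  proof (cases "j \<le> b j")
    case True
    show ?thesis
    proof (cases "j = 1")
      case True
      then show ?thesis using hyp j \<open>j \<le> b j\<close> by auto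
    next
      case False
      define c where "c = b(j - 1 := j - 1)"
      have jj: "Suc (j-1) = j" "j - 1 \<le> m" using j False by auto
      have split: "(\<Sum>i=j-1..m. f i) = f (j-1) + (\<Sum>i=j..m. f i)" for f :: "nat \<Rightarrow> nat"
        using sum.atLeast_Suc_atMost[OF jj(2), of f] jj(1) by simp
      have cb: "c i = b i" if "i \<in> {j..m}" for i using that jj unfolding c_def by auto
      have s1: "(\<Sum>i=j-1..m. c i choose i) = 1 + (\<Sum>i=j..m. b i choose i)"
        unfolding split using cb by (simp add: c_def)
      obtain t where t: "j - 1 = Suc t" using j False by (cases "j - 1") auto
      have "c (j - 1) choose (j - 1 - 1) = j - 1" unfolding c_def t by simp
      then have s2: "(\<Sum>i=j-1..m. c i choose (i - 1)) = (j - 1) + (\<Sum>i=j..m. b i choose (i - 1))"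
        unfolding split using cb by simp
      have "\<forall>i. j - 1 \<le> i \<and> i < m \<longrightarrow> c i < c (Suc i)"
      proof (intro allI impI)
        fix i assume "j - 1 \<le> i \<and> i < m"
        then show "c i < c (Suc i)" using j \<open>j \<le> b j\<close> False unfolding c_def
          by (cases "i = j - 1") auto
      qed
      then have "(\<Sum>i=j-1..m. c i choose (i - 1)) \<le> card (shadow G)"
        using hyp[rule_format, of "j - 1" c] j False s1 by (auto simp: c_def)
      then show ?thesis using s2 by simp
    qed
  next
    case False
    then have bj: "b j = j - 1" using j by simp
    show ?thesis
    proof (cases "j = m")
      case True
      obtain A where "A \<in> G" using j by fastforce
      then have "m \<le> card (shadow G)" using card_shadow_ge_m[OF U] j by force
      then show ?thesis using True bj j by simp
    next
      case False
      have bj1: "j \<le> b (Suc j)" using j bj False by force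
      have e1: "(\<Sum>i=j..m. b i choose i) = (\<Sum>i=Suc j..m. b i choose i)"
        using j bj by (simp add: sum.atLeast_Suc_atMost)
      have e2: "(\<Sum>i=j..m. b i choose (i - 1)) = 1 + (\<Sum>i=Suc j..m. b i choose (i - 1))"
        using j bj by (simp add: sum.atLeast_Suc_atMost)
      have "(\<Sum>i=Suc j..m. b i choose (i - 1)) + (Suc j - 1) \<le> card (shadow G)"
        using less.hyps[of "Suc j"] j False bj1 e1 by auto
      then show ?thesis using e2 j by simp
    qed
  qed
qed




lemma KK:
  "finite U \<Longrightarrow> F \<subseteq> Pow U \<Longrightarrow> (\<forall>A\<in>F. card A = m) \<Longrightarrow> 1 \<le> j \<Longrightarrow> j \<le> m \<Longrightarrow>
   (\<forall>i. j \<le> i \<and> i < m \<longrightarrow> a i < a (Suc i)) \<Longrightarrow> j \<le> a j \<Longrightarrow>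
   (\<Sum>i=j..m. a i choose i) \<le> card F \<Longrightarrow> (\<Sum>i=j..m. a i choose (i - 1)) \<le> card (shadow F)"
proof (induction "card U" arbitrary: U F m j a rule: less_induct)
  case less
  note P = less.prems
  have aige: "i \<le> a i" if "j \<le> i" "i \<le> m" for i
    using incr_ge[OF P(6) that] P(7) by simp
  have "1 \<le> a m choose m" using aige[of m] P by (simp add: Suc_le_eq)
  moreover have "a m choose m \<le> (\<Sum>i=j..m. a i choose i)"
    using P by (intro member_le_sum) auto
  ultimately have "card F \<noteq> 0" using P by linarith
  then obtain A where A: "A \<in> F" by fastforce
  then have "card A = m" using P by auto
  then obtain e where "e \<in> A" using P by fastforce
  then have eU: "e \<in> U" using A P by auto
  obtain G where G: "G \<subseteq> Pow U" "\<forall>A\<in>G. card A = m" "card G = card F"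
     "card (shadow G) \<le> card (shadow F)" "\<forall>A\<in>G. \<forall>x\<in>A. e \<notin> A \<longrightarrow> insert e (A - {x}) \<in> G"
    using exists_stable[OF P(1) eU P(2,3)] by blast
  have finG: "finite G" using G(1) P(1) by (meson finite_Pow_iff rev_finite_subset)
  define G0 where "G0 = {A \<in> G. e \<notin> A}"
  define G1 where "G1 = (\<lambda>A. A - {e}) ` {A \<in> G. e \<in> A}"
  have U': "finite (U - {e})" "card (U - {e}) < card U"
    using P(1) card_Diff1_less[OF P(1) eU] by auto
  have G0P: "G0 \<subseteq> Pow (U - {e})" using G(1) unfolding G0_def by auto
  have G1P: "G1 \<subseteq> Pow (U - {e})" using G(1) unfolding G1_def by auto
  have G0m: "\<forall>A\<in>G0. card A = m" using G unfolding G0_def by auto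
  have G1m: "\<forall>A\<in>G1. card A = m - 1" using G unfolding G1_def by auto
  have cardG: "card G = card G0 + card G1"
  proof -
    have "inj_on (\<lambda>A. A - {e}) {A \<in> G. e \<in> A}"
      by (rule inj_onI) (metis (no_types, lifting) insert_Diff mem_Collect_eq)
    then have "card G1 = card {A \<in> G. e \<in> A}" unfolding G1_def by (simp add: card_image)
    moreover have "G = G0 \<union> {A \<in> G. e \<in> A}" "G0 \<inter> {A \<in> G. e \<in> A} = {}" unfolding G0_def by auto
    moreover have "card (G0 \<union> {A \<in> G. e \<in> A}) = card G0 + card {A \<in> G. e \<in> A}"
      by (rule card_Un_disjoint) (use finG in \<open>auto simp: G0_def\<close>)
    ultimately show ?thesis by simp
  qed
  have sh0: "shadow G0 \<subseteq> G1"
  proof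
    fix B assume "B \<in> shadow G0"
    then obtain A y where Ay: "A \<in> G" "e \<notin> A" "y \<in> A" "B = A - {y}" unfolding shadow_def G0_def by auto
    then have "insert e (A - {y}) \<in> G" using G(5) by auto
    moreover have "B = insert e (A - {y}) - {e}" using Ay by auto
    ultimately show "B \<in> G1" unfolding G1_def by auto
  qed
  have shG: "card G1 + card (shadow G1) \<le> card (shadow G)"
  proof -
    have "G1 \<subseteq> shadow G" unfolding G1_def shadow_def by auto
    moreover have "insert e ` shadow G1 \<subseteq> shadow G"
    proof
      fix B assume "B \<in> insert e ` shadow G1"
      then obtain A y where Ay: "A \<in> G" "e \<in> A" "y \<in> A" "y \<noteq> e" "B = insert e (A - {e} - {y})"
        unfolding shadow_def G1_def by auto
      then have "B = A - {y}" by auto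
      then show "B \<in> shadow G" using Ay unfolding shadow_def by auto
    qed
    moreover have "G1 \<inter> insert e ` shadow G1 = {}" unfolding G1_def by auto
    moreover have "inj_on (insert e) (shadow G1)"
      by (rule inj_onI) (auto simp: shadow_def G1_def)
    moreover have fs: "finite (shadow G)" using finite_shadow[OF P(1) G(1)] .
    ultimately have f1: "finite G1" "finite (insert e ` shadow G1)"
      by (auto intro: finite_subset)
    have "card (G1 \<union> insert e ` shadow G1) = card G1 + card (insert e ` shadow G1)"
      by (rule card_Un_disjoint) (use f1 \<open>G1 \<inter> insert e ` shadow G1 = {}\<close> in auto)
    also have "card (insert e ` shadow G1) = card (shadow G1)"
      by (rule card_image) fact
    finally have "card G1 + card (shadow G1) = card (G1 \<union> insert e ` shadow G1)" by simp
    also have "\<dots> \<le> card (shadow G)"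
      by (rule card_mono[OF fs]) (use \<open>G1 \<subseteq> shadow G\<close> \<open>insert e ` shadow G1 \<subseteq> shadow G\<close> in blast)
    finally show ?thesis .
  qed
  define X where "X = (\<Sum>i=j..m. (a i - 1) choose (i - 1))"
  have pascal: "(\<Sum>i=j..m. a i choose i) = (\<Sum>i=j..m. (a i - 1) choose i) + X"
  proof -
    have "(\<Sum>i=j..m. a i choose i) = (\<Sum>i=j..m. ((a i - 1) choose i) + ((a i - 1) choose (i - 1)))"
    proof (rule sum.cong)
      fix i assume "i \<in> {j..m}"
      then have "1 \<le> i" "i \<le> a i" using P aige by auto
      then show "a i choose i = ((a i - 1) choose i) + ((a i - 1) choose (i - 1))"
        using choose_reduce_nat[of "a i" i] by simp
    qed simp
    then show ?thesis unfolding X_def by (simp add: sum.distrib)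
  qed
  have G1X: "X \<le> card G1"
  proof (rule ccontr)
    assume "\<not> X \<le> card G1"
    then have "(\<Sum>i=j..m. (a i - 1) choose i) < card G0" using cardG G(3) P(8) pascal by linarith
    note lt = this
    have hypG0: "KKhyp G0 m"
      by (intro allI impI, rule less.hyps[OF U'(2) U'(1) G0P G0m], assumption+)
    have dec: "\<forall>i. j \<le> i \<and> i < m \<longrightarrow> a i - 1 < a (Suc i) - 1"
    proof (intro allI impI)
      fix i assume H: "j \<le> i \<and> i < m"
      then have "a i < a (Suc i)" using P(6) by blast
      moreover have "1 \<le> a i" using aige[of i] H P(4) by linarith
      ultimately show "a i - 1 < a (Suc i) - 1" by linarith
    qed
    have bj: "j - 1 \<le> a j - 1" using P by simp
    have "(\<Sum>i=j..m. (a i - 1) choose (i - 1)) + (j - 1) \<le> card (shadow G0)"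
      by (rule strict[OF hypG0 U'(1) G0P P(4) P(5) dec bj lt G0m])
    then have "X + (j - 1) \<le> card (shadow G0)" unfolding X_def .
    moreover have "card (shadow G0) \<le> card G1"
      using sh0 by (intro card_mono) (use finG in \<open>auto simp: G1_def\<close>)
    ultimately show False using \<open>\<not> X \<le> card G1\<close> by linarith
  qed
  define Y where "Y = (\<Sum>i=j..m. if i = 1 then 0 else (a i - 1) choose (i - 2))"
  have G1Y: "Y \<le> card (shadow G1)"
  proof (cases "m < max j 2")
    case True
    then have "m = 1" "j = 1" using P by auto
    then show ?thesis unfolding Y_def by simp
  next
    case False
    define j' where "j' = max j 2"
    have Y': "Y = (\<Sum>i=j'..m. (a i - 1) choose (i - 2))"
    proof (cases "j = 1")
      case True
      then have "j' = 2" unfolding j'_def by simp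
      have "Y = (if 1 = (1::nat) then 0 else (a 1 - 1) choose (1 - 2)) +
          (\<Sum>i=Suc 1..m. if i = 1 then 0 else (a i - 1) choose (i - 2))"
        unfolding Y_def True using P by (intro sum.atLeast_Suc_atMost) simp
      also have "\<dots> = (\<Sum>i=j'..m. (a i - 1) choose (i - 2))"
        using \<open>j' = 2\<close> by (simp add: numeral_2_eq_2)
      finally show ?thesis .
    next
      case False
      then have "j' = j" "j \<ge> 2" using P unfolding j'_def by auto
      then show ?thesis unfolding Y_def by (intro sum.cong) auto
    qed
    have X': "(\<Sum>i=j'..m. (a i - 1) choose (i - 1)) \<le> X"
      unfolding X_def j'_def by (rule sum_mono2) auto
    define b where "b i = a (Suc i) - 1" for i
    have r1: "(\<Sum>i=j'-1..m-1. b i choose i) = (\<Sum>i=j'..m. (a i - 1) choose (i - 1))"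
    proof -
      have "(\<Sum>i=j'..m. (a i - 1) choose (i - 1)) = (\<Sum>i=Suc (j'-1)..Suc (m-1). (a i - 1) choose (i - 1))"
        using False unfolding j'_def by simp
      also have "\<dots> = (\<Sum>i=j'-1..m-1. b i choose i)"
        unfolding sum.shift_bounds_cl_Suc_ivl b_def by simp
      finally show ?thesis by simp
    qed
    have r2: "(\<Sum>i=j'-1..m-1. b i choose (i - 1)) = (\<Sum>i=j'..m. (a i - 1) choose (i - 2))"
    proof -
      have "(\<Sum>i=j'..m. (a i - 1) choose (i - 2)) = (\<Sum>i=Suc (j'-1)..Suc (m-1). (a i - 1) choose (i - 2))"
        using False unfolding j'_def by simp
      also have "\<dots> = (\<Sum>i=j'-1..m-1. b i choose (i - 1))"
        unfolding sum.shift_bounds_cl_Suc_ivl b_def by simp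
      finally show ?thesis by simp
    qed
    have binc: "\<forall>i. j' - 1 \<le> i \<and> i < m - 1 \<longrightarrow> b i < b (Suc i)"
    proof (intro allI impI)
      fix i assume H: "j' - 1 \<le> i \<and> i < m - 1"
      then have "j \<le> Suc i" "Suc i < m" unfolding j'_def by auto
      then have "a (Suc i) < a (Suc (Suc i))" "Suc i \<le> a (Suc i)" using P(6) aige by auto
      then show "b i < b (Suc i)" unfolding b_def by simp
    qed
    have jj': "j \<le> j'" "j' \<le> m" "Suc (j' - 1) = j'" using False unfolding j'_def by auto
    have "j' \<le> a j'" using aige[OF jj'(1,2)] .
    then have bj: "j' - 1 \<le> b (j' - 1)" unfolding b_def jj'(3) by simp
    have j1: "1 \<le> j' - 1" "j' - 1 \<le> m - 1" using False unfolding j'_def by auto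
    have le1: "(\<Sum>i=j'-1..m-1. b i choose i) \<le> card G1" using r1 X' G1X by linarith
    have "(\<Sum>i=j'-1..m-1. b i choose (i - 1)) \<le> card (shadow G1)"
      by (rule less.hyps[OF U'(2) U'(1) G1P G1m j1 binc bj le1])
    then show ?thesis using r2 Y' by simp
  qed
  have XY: "(\<Sum>i=j..m. a i choose (i - 1)) = X + Y"
  proof -
    have "(\<Sum>i=j..m. a i choose (i - 1)) =
        (\<Sum>i=j..m. ((a i - 1) choose (i - 1)) + (if i = 1 then 0 else (a i - 1) choose (i - 2)))"
    proof (rule sum.cong)
      fix i assume "i \<in> {j..m}"
      then have "1 \<le> i" "i \<le> a i" using P aige by auto
      then show "a i choose (i - 1) = ((a i - 1) choose (i - 1)) + (if i = 1 then 0 else (a i - 1) choose (i - 2))"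
        using choose_reduce_nat[of "a i" "i - 1"] by (cases "i = 1") (auto simp: numeral_2_eq_2)
    qed simp
    then show ?thesis unfolding X_def Y_def by (simp add: sum.distrib)
  qed
  show ?case using XY G1X G1Y shG G(4) by linarith
qed




definition lsh :: "nat \<Rightarrow> nat set set \<Rightarrow> nat set set" where
  "lsh l F = {B. card B = l \<and> (\<exists>A\<in>F. B \<subseteq> A)}"

lemma lsh_shadow:
  assumes "finite U" "F \<subseteq> Pow U" "\<forall>A\<in>F. card A = m" "l < m"
  shows "lsh l (shadow F) = lsh l F"
proof
  show "lsh l (shadow F) \<subseteq> lsh l F" unfolding lsh_def shadow_def by blast
  show "lsh l F \<subseteq> lsh l (shadow F)"
  proof
    fix B assume "B \<in> lsh l F"
    then obtain A where A: "A \<in> F" "B \<subseteq> A" "card B = l" unfolding lsh_def by auto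
    have fA: "finite A" using A assms by (meson PowD finite_subset subsetD)
    have "B \<noteq> A" using A assms by auto
    then obtain y where "y \<in> A" "y \<notin> B" using A by blast
    then have "B \<subseteq> A - {y}" "A - {y} \<in> shadow F" using A unfolding shadow_def by auto
    then show "B \<in> lsh l (shadow F)" using A unfolding lsh_def by auto
  qed
qed

lemma lsh_self:
  assumes "finite U" "F \<subseteq> Pow U" "\<forall>A\<in>F. card A = m"
  shows "lsh m F = F"
proof
  show "lsh m F \<subseteq> F"
  proof
    fix B assume "B \<in> lsh m F"
    then obtain A where A: "A \<in> F" "B \<subseteq> A" "card B = m" unfolding lsh_def by auto
    have fA: "finite A" using A assms by (meson PowD finite_subset subsetD)
    then have "B = A" using A assms by (metis card_subset_eq)
    then show "B \<in> F" using A by simp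
  qed
  show "F \<subseteq> lsh m F" using assms unfolding lsh_def by auto
qed

lemma shadow_m:
  assumes "finite U" "F \<subseteq> Pow U" "\<forall>A\<in>F. card A = m"
  shows "\<forall>B\<in>shadow F. card B = m - 1"
  using assms unfolding shadow_def
  by (auto simp: card_Diff_singleton_if)

lemma KK_iter:
  "finite U \<Longrightarrow> F \<subseteq> Pow U \<Longrightarrow> (\<forall>A\<in>F. card A = m) \<Longrightarrow> l \<le> m \<Longrightarrow> 1 \<le> j \<Longrightarrow> j \<le> m \<Longrightarrow>
   (\<forall>i. j \<le> i \<and> i < m \<longrightarrow> a i < a (Suc i)) \<Longrightarrow> j \<le> a j \<Longrightarrow>
   (\<Sum>i=j..m. a i choose i) \<le> card F \<Longrightarrow>
   (\<Sum>i=j..m. binom_z (a i) (int i - int (m - l))) \<le> card (lsh l F)"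
proof (induction "m - l" arbitrary: F m j a)
  case 0
  then have "l = m" by simp
  then show ?case using 0 lsh_self[of U F m] by (simp add: binom_z_def)
next
  case (Suc d)
  note P = Suc.prems
  have aige: "i \<le> a i" if "j \<le> i" "i \<le> m" for i
    using incr_ge[OF P(7) that] P(8) by simp
  have KK1: "(\<Sum>i=j..m. a i choose (i - 1)) \<le> card (shadow F)"
    using KK[OF P(1,2,3,5,6,7,8,9)] .
  have lshF: "lsh l (shadow F) = lsh l F" using lsh_shadow[OF P(1,2,3)] Suc.hyps(2) by simp
  have SP: "shadow F \<subseteq> Pow U" using shadow_Pow[OF P(2)] .
  have Sm: "\<forall>B\<in>shadow F. card B = m - 1" using shadow_m[OF P(1,2,3)] .
  show ?case
  proof (cases d)
    case 0
    then have ml: "m - l = 1" using Suc.hyps by simp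
    have "(\<Sum>i=j..m. binom_z (a i) (int i - int (m - l))) = (\<Sum>i=j..m. a i choose (i - 1))"
      unfolding ml using P by (intro sum.cong) (auto simp: binom_z_def nat_diff_distrib)
    moreover have "lsh l (shadow F) = shadow F"
    proof -
      have lm: "l = m - 1" using ml by simp
      show ?thesis using lsh_self[OF P(1) SP Sm] unfolding lm .
    qed
    ultimately show ?thesis using KK1 lshF by simp
  next
    case (Suc d')
    then have m2: "m \<ge> 2" "m - l \<ge> 2" using Suc.hyps P by auto
    define j' where "j' = max j 2"
    define b where "b i = a (Suc i)" for i
    have binc: "\<forall>i. j' - 1 \<le> i \<and> i < m - 1 \<longrightarrow> b i < b (Suc i)"
    proof (intro allI impI)
      fix i assume H: "j' - 1 \<le> i \<and> i < m - 1"
      then have "j \<le> Suc i \<and> Suc i < m" unfolding j'_def by auto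
      then show "b i < b (Suc i)" using P(7) unfolding b_def by blast
    qed
    have jj': "j \<le> j'" "j' \<le> m" "Suc (j' - 1) = j'" using m2 P(6) unfolding j'_def by auto
    have "j' \<le> a j'" using aige[OF jj'(1,2)] .
    then have bj: "j' - 1 \<le> b (j' - 1)" unfolding b_def jj'(3) by simp
    have r1: "(\<Sum>i=j'-1..m-1. b i choose i) = (\<Sum>i=j'..m. a i choose (i - 1))"
    proof -
      have "(\<Sum>i=j'..m. a i choose (i - 1)) = (\<Sum>i=Suc (j'-1)..Suc (m-1). a i choose (i - 1))"
        using m2 unfolding j'_def by simp
      also have "\<dots> = (\<Sum>i=j'-1..m-1. b i choose i)"
        unfolding sum.shift_bounds_cl_Suc_ivl b_def by simp
      finally show ?thesis by simp
    qed
    have r1': "(\<Sum>i=j'..m. a i choose (i - 1)) \<le> (\<Sum>i=j..m. a i choose (i - 1))"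
      unfolding j'_def by (rule sum_mono2) auto
    have d: "d = (m - 1) - l" using Suc.hyps(2) by simp
    have lm: "l \<le> m - 1" using m2 by simp
    have j1: "1 \<le> j' - 1" "j' - 1 \<le> m - 1" using m2 P(6) unfolding j'_def by auto
    have le1: "(\<Sum>i=j'-1..m-1. b i choose i) \<le> card (shadow F)" using r1 r1' KK1 by linarith
    have "(\<Sum>i=j'-1..m-1. binom_z (b i) (int i - int (m - 1 - l))) \<le> card (lsh l (shadow F))"
      by (rule Suc.hyps(1)[OF d P(1) SP Sm lm j1 binc bj le1])
    moreover have "(\<Sum>i=j'-1..m-1. binom_z (b i) (int i - int (m - 1 - l))) =
        (\<Sum>i=j'..m. binom_z (a i) (int i - int (m - l)))"
    proof -
      have "(\<Sum>i=j'..m. binom_z (a i) (int i - int (m - l))) =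
          (\<Sum>i=Suc (j'-1)..Suc (m-1). binom_z (a i) (int i - int (m - l)))"
        using m2 unfolding j'_def by simp
      also have "\<dots> = (\<Sum>i=j'-1..m-1. binom_z (b i) (int i - int (m - 1 - l)))"
        unfolding sum.shift_bounds_cl_Suc_ivl b_def using m2 P(4)
        by (intro sum.cong refl) (simp add: of_nat_diff algebra_simps)
      finally show ?thesis by simp
    qed
    moreover have "(\<Sum>i=j..m. binom_z (a i) (int i - int (m - l))) = (\<Sum>i=j'..m. binom_z (a i) (int i - int (m - l)))"
    proof (cases "j = 1")
      case True
      then have "j' = 2" unfolding j'_def by simp
      then show ?thesis using True m2 by (simp add: sum.atLeast_Suc_atMost binom_z_def numeral_2_eq_2)
    next
      case False
      then have "j' = j" using P(5) unfolding j'_def by auto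
      then show ?thesis by simp
    qed
    ultimately show ?thesis using lshF by simp
  qed
qed

theorem lemma2p9:
  fixes n k j :: nat and Q :: "nat set set" and q :: "nat \<Rightarrow> nat"
  assumes "2 * k + 1 \<le> n" and "5 \<le> 2 * k + 1"
    and "kneser_independent n k Q"
    and "1 \<le> j" and "j \<le> n - k"
    and "\<forall>i. j \<le> i \<and> i < n - k \<longrightarrow> q i < q (Suc i)"
    and "j \<le> q j"
    and "card Q = (\<Sum>i = j..n - k. q i choose i)"
  shows "card (kneser_nbhd n k Q) \<ge>
           (\<Sum>i = j..n - k. binom_z (q i) (int i - (int n - 2 * int k)))"
proof -
  define F where "F = (\<lambda>A. {1..n} - A) ` Q"
  have QV: "Q \<subseteq> kneser_V n k" using assms(3) unfolding kneser_independent_def by auto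
  then have Qs: "\<forall>A\<in>Q. A \<subseteq> {1..n} \<and> card A = k" unfolding kneser_V_def by auto
  have "inj_on (\<lambda>A. {1..n} - A) Q"
    by (rule inj_onI) (metis Qs double_diff order_refl)
  then have cF: "card F = card Q" unfolding F_def by (simp add: card_image)
  have FP: "F \<subseteq> Pow {1..n}" unfolding F_def by auto
  have Fm: "\<forall>A\<in>F. card A = n - k" unfolding F_def using Qs by (auto simp: card_Diff_subset finite_subset)
  have main: "(\<Sum>i=j..n-k. binom_z (q i) (int i - int (n - k - k))) \<le> card (lsh k F)"
    using KK_iter[of "{1..n}" F "n - k" k j q] FP Fm assms cF by simp
  have "lsh k F \<subseteq> kneser_nbhd n k Q"
  proof
    fix B assume "B \<in> lsh k F"
    then obtain A where A: "A \<in> Q" "B \<subseteq> {1..n} - A" "card B = k" unfolding lsh_def F_def by auto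
    have "B \<notin> Q"
    proof
      assume "B \<in> Q"
      have "A \<noteq> B"
      proof
        assume "A = B"
        then have "B = {}" using A(2) by blast
        then show False using A(3) assms(2) by simp
      qed
      then have "\<not> kneser_adj A B" using assms(3) A \<open>B \<in> Q\<close> unfolding kneser_independent_def by auto
      then show False using A unfolding kneser_adj_def by auto
    qed
    then show "B \<in> kneser_nbhd n k Q" using A unfolding kneser_nbhd_def kneser_V_def kneser_adj_def by auto
  qed
  moreover have "finite (kneser_nbhd n k Q)"
    unfolding kneser_nbhd_def kneser_V_def by (rule finite_subset[of _ "Pow {1..n}"]) auto
  ultimately have "card (lsh k F) \<le> card (kneser_nbhd n k Q)" by (rule card_mono[rotated])
  moreover have "int (n - k - k) = int n - 2 * int k" using assms(1) by simp
  ultimately show ?thesis using main by simp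
qed


end
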